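(* Let $q>2$ be a prime power, $h\geq 2$, and let $\mathcal{L}_1,\mathcal{L}_2,\mathcal{L}_3$ be pairwise disjoint blocking sets of $\mathrm{PG}(2,q^h)$, each projectively equivalent to $\{(x:\mathrm{Tr}_{q^h/q}(x):y): x\in\mathbb{F}_{q^h},\ y\in\mathbb{F}_q,\ (x,y)\neq(0,0)\}$. Then $\mathcal{L}_1\cup\mathcal{L}_2\cup\mathcal{L}_3$ is a minimal $3$-fold blocking set.
   Context: $\mathrm{Tr}_{q^h/q}(x)=x+x^q+\dots+x^{q^{h-1}}$. A $t$-fold blocking set is a point set meeting every line in at least $t$ points; it is minimal if it contains no smaller $t$-fold blocking set (equivalently, each of its points lies on a line meeting it in exactly $t$ points). *)

theory Defs
  imports "HOL-Analysis.Analysis"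
begin

definition proj_pt :: "'a::field ^ 3 \<Rightarrow> ('a ^ 3) set" where
  "proj_pt v = {c *s v | c. c \<noteq> 0}"

definition PG2_points :: "('a::field ^ 3) set set" where
  "PG2_points = {proj_pt v | v. v \<noteq> 0}"

definition PG2_line :: "'a::field ^ 3 \<Rightarrow> ('a ^ 3) set set" where
  "PG2_line u = {proj_pt v | v. v \<noteq> 0 \<and> (\<Sum>i\<in>UNIV. u $ i * v $ i) = 0}"

definition PG2_lines :: "('a::field ^ 3) set set set" where
  "PG2_lines = {PG2_line u | u. u \<noteq> 0}"

definition t_fold_blocking :: "nat \<Rightarrow> ('a::field ^ 3) set set \<Rightarrow> bool" where
  "t_fold_blocking t B \<longleftrightarrow> B \<subseteq> PG2_points \<and>
     (\<forall>L\<in>PG2_lines. card (B \<inter> L) \<ge> t)"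

definition blocking_set :: "('a::field ^ 3) set set \<Rightarrow> bool" where
  "blocking_set B \<longleftrightarrow> t_fold_blocking 1 B"

definition minimal_t_fold_blocking :: "nat \<Rightarrow> ('a::field ^ 3) set set \<Rightarrow> bool" where
  "minimal_t_fold_blocking t B \<longleftrightarrow> t_fold_blocking t B \<and>
     (\<forall>B'. B' \<subset> B \<longrightarrow> \<not> t_fold_blocking t B')"

definition proj_image :: "'a::field ^ 3 ^ 3 \<Rightarrow> ('a ^ 3) set set \<Rightarrow> ('a ^ 3) set set" where
  "proj_image M S = {proj_pt (M *v v) | v. v \<noteq> 0 \<and> proj_pt v \<in> S}"

definition proj_equivalent :: "('a::field ^ 3) set set \<Rightarrow> ('a ^ 3) set set \<Rightarrow> bool" where
  "proj_equivalent A B \<longleftrightarrow> (\<exists>M :: 'a ^ 3 ^ 3. invertible M \<and> B = proj_image M A)"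

definition trace_rel :: "nat \<Rightarrow> nat \<Rightarrow> 'a::field \<Rightarrow> 'a" where
  "trace_rel q h x = (\<Sum>i<h. x ^ (q ^ i))"

text \<open>The subfield F_q of a field of order q^h.\<close>

definition subfield_q :: "nat \<Rightarrow> 'a::field set" where
  "subfield_q q = {y. y ^ q = y}"

definition trace_set :: "nat \<Rightarrow> nat \<Rightarrow> ('a::field ^ 3) set set" where
  "trace_set q h = {proj_pt (vector [x, trace_rel q h x, y]) | x y.
      y \<in> subfield_q q \<and> (x, y) \<noteq> (0, 0)}"

definition prime_power :: "nat \<Rightarrow> bool" where
  "prime_power q \<longleftrightarrow> (\<exists>p k. prime p \<and> k > 0 \<and> q = p ^ k)"

end

theory Submission
  imports Defs "HOL-Number_Theory.Residues" "HOL-Computational_Algebra.Polynomial"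
begin

lemma frob_add:
  fixes a b :: "'a::{finite,field}"
  assumes "prime_power q" "CARD('a) = q ^ h" "h > 0"
  shows "(a + b) ^ (q ^ i) = a ^ (q ^ i) + b ^ (q ^ i)"
proof -
  obtain p k where pk: "prime p" "k > 0" "q = p ^ k" using assms(1) unfolding prime_power_def by blast
  have pc: "prime CHAR('a)"
    using prime_CHAR_semidom[where ?'a = 'a] finite_imp_CHAR_pos[where ?'a = 'a] by auto
  have "CHAR('a) dvd p ^ (k * h)" using CHAR_dvd_CARD[where ?'a='a] assms(2) pk by (simp add: power_mult)
  then have "CHAR('a) dvd p" using pc prime_dvd_power by blast
  then have cp: "CHAR('a) = p" using pc pk(1) primes_dvd_imp_eq by blast
  have "q ^ i = CHAR('a) ^ (k * i)" using cp pk by (simp add: power_mult)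
  then show ?thesis using freshmans_dream'[OF pc] by blast
qed


definition dt :: "'a::field^3 \<Rightarrow> 'a^3 \<Rightarrow> 'a" where
  "dt u v = (\<Sum>i\<in>UNIV. u $ i * v $ i)"

lemma dt3: "dt u v = u$1 * v$1 + u$2 * v$2 + u$3 * v$3"
  by (simp add: dt_def sum_3)

lemma dt_add: "dt u (v + w) = dt u v + dt u w"
  by (simp add: dt3 algebra_simps)

lemma dt_scale: "dt u (c *s v) = c * dt u v"
  by (simp add: dt3 algebra_simps)

lemma dt_ldiff: "dt (f - t *s g) v = dt f v - t * dt g v"
  by (simp add: dt3 algebra_simps)

lemma proj_pt_scale: "(c::'a::field) \<noteq> 0 \<Longrightarrow> proj_pt (c *s v) = proj_pt v"
  unfolding proj_pt_def
proof (intro Set.set_eqI iffI)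
  fix x assume c: "c \<noteq> 0" and "x \<in> {d *s (c *s v) |d. d \<noteq> 0}"
  then obtain d where "d \<noteq> 0" "x = d *s (c *s v)" by blast
  then show "x \<in> {d *s v |d. d \<noteq> 0}" using c by (auto simp: vector_smult_assoc)
next
  fix x assume c: "c \<noteq> 0" and "x \<in> {d *s v |d. d \<noteq> 0}"
  then obtain d where d: "d \<noteq> 0" "x = d *s v" by blast
  have "x = (d / c) *s (c *s v)" using c d by (simp add: vector_smult_assoc)
  moreover have "d / c \<noteq> 0" using c d by simp
  ultimately show "x \<in> {d *s (c *s v) |d. d \<noteq> 0}" by blast
qed

lemma self_in_proj_pt: "v \<in> proj_pt v"
  unfolding proj_pt_def by (rule CollectI, rule exI[of _ 1]) simp

lemma proj_pt_eqD: "proj_pt v = proj_pt w \<Longrightarrow> \<exists>c. c \<noteq> 0 \<and> w = c *s v"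
  using self_in_proj_pt[of w] unfolding proj_pt_def by auto

lemma in_line_iff: assumes "v \<noteq> 0" shows "proj_pt v \<in> PG2_line u \<longleftrightarrow> dt u v = 0"
proof
  assume "proj_pt v \<in> PG2_line u"
  then obtain w where w: "w \<noteq> 0" "dt u w = 0" "proj_pt v = proj_pt w"
    unfolding PG2_line_def dt_def by auto
  then obtain c where "w = c *s v" "c \<noteq> 0" using proj_pt_eqD[of v w] by blast
  then have "c * dt u v = 0" using w by (simp add: dt_scale)
  then show "dt u v = 0" using \<open>c \<noteq> 0\<close> by simp
next
  assume "dt u v = 0" then show "proj_pt v \<in> PG2_line u"
    using assms unfolding PG2_line_def dt_def by auto
qed

lemma line_elem: "X \<in> PG2_line u \<Longrightarrow> \<exists>v. v \<noteq> 0 \<and> X = proj_pt v \<and> dt u v = 0"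
  unfolding PG2_line_def dt_def by auto

lemma line_in_lines: "u \<noteq> 0 \<Longrightarrow> PG2_line u \<in> PG2_lines"
  unfolding PG2_lines_def by auto

lemma points_elem: "X \<in> PG2_points \<Longrightarrow> \<exists>v. v \<noteq> 0 \<and> X = proj_pt v"
  unfolding PG2_points_def by auto

lemma pencil:
  fixes p :: "'a::field^3"
  assumes "p \<noteq> 0"
  shows "\<exists>f g. dt f p = 0 \<and> dt g p = 0 \<and> g \<noteq> 0 \<and> (\<forall>t. f - t *s g \<noteq> 0) \<and>
     (\<forall>v. dt f v = 0 \<and> dt g v = 0 \<longrightarrow> (\<exists>c. v = c *s p))"
proof -
  have "p$1 \<noteq> 0 \<or> p$2 \<noteq> 0 \<or> p$3 \<noteq> 0" using assms by (auto simp: vec_eq_iff forall_3)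
  then consider "p$3 \<noteq> 0" | "p$2 \<noteq> 0" | "p$1 \<noteq> 0" by blast
  then show ?thesis
  proof cases
    case 1
    define f :: "'a^3" where "f = vector [p$3, 0, -p$1]"
    define g :: "'a^3" where "g = vector [0, p$3, -p$2]"
    show ?thesis
    proof (rule exI, rule exI, intro conjI allI impI)
      show "dt f p = 0" "dt g p = 0" by (simp_all add: f_def g_def dt3 algebra_simps)
      show "g \<noteq> 0" using 1 by (auto simp: g_def vec_eq_iff forall_3)
      fix t show "f - t *s g \<noteq> 0" using 1 by (auto simp: f_def g_def vec_eq_iff forall_3)
    next
      fix v :: "'a^3" assume "dt f v = 0 \<and> dt g v = 0"
      then have e: "p$3 * v$1 = p$1 * v$3" "p$3 * v$2 = p$2 * v$3"
        by (simp_all add: f_def g_def dt3 algebra_simps)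
      show "\<exists>c. v = c *s p"
        apply (rule exI[of _ "v$3 / p$3"])
        using 1 e by (simp add: vec_eq_iff forall_3 field_simps)
    qed
  next
    case 2
    define f :: "'a^3" where "f = vector [p$2, -p$1, 0]"
    define g :: "'a^3" where "g = vector [0, -p$3, p$2]"
    show ?thesis
    proof (rule exI, rule exI, intro conjI allI impI)
      show "dt f p = 0" "dt g p = 0" by (simp_all add: f_def g_def dt3 algebra_simps)
      show "g \<noteq> 0" using 2 by (auto simp: g_def vec_eq_iff forall_3)
      fix t show "f - t *s g \<noteq> 0" using 2 by (auto simp: f_def g_def vec_eq_iff forall_3)
    next
      fix v :: "'a^3" assume "dt f v = 0 \<and> dt g v = 0"
      then have e: "p$2 * v$1 = p$1 * v$2" "p$2 * v$3 = p$3 * v$2"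
        by (simp_all add: f_def g_def dt3 algebra_simps)
      show "\<exists>c. v = c *s p"
        apply (rule exI[of _ "v$2 / p$2"])
        using 2 e by (simp add: vec_eq_iff forall_3 field_simps)
    qed
  next
    case 3
    define f :: "'a^3" where "f = vector [-p$2, p$1, 0]"
    define g :: "'a^3" where "g = vector [-p$3, 0, p$1]"
    show ?thesis
    proof (rule exI, rule exI, intro conjI allI impI)
      show "dt f p = 0" "dt g p = 0" by (simp_all add: f_def g_def dt3 algebra_simps)
      show "g \<noteq> 0" using 3 by (auto simp: g_def vec_eq_iff forall_3)
      fix t show "f - t *s g \<noteq> 0" using 3 by (auto simp: f_def g_def vec_eq_iff forall_3)
    next
      fix v :: "'a^3" assume "dt f v = 0 \<and> dt g v = 0"
      then have e: "p$1 * v$2 = p$2 * v$1" "p$1 * v$3 = p$3 * v$1"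
        by (simp_all add: f_def g_def dt3 algebra_simps)
      show "\<exists>c. v = c *s p"
        apply (rule exI[of _ "v$1 / p$1"])
        using 3 e by (simp add: vec_eq_iff forall_3 field_simps)
    qed
  qed
qed


lemma fin_power_card_same:
  fixes x :: "'a :: {finite,field}"
  shows   "x ^ card (UNIV :: 'a set) = x"
proof (cases "x = 0")
  case False
  have "x * (\<Prod>y\<in>UNIV-{0}. x * y) = x * x ^ (card (UNIV :: 'a set) - 1) * \<Prod>(UNIV-{0})"
    by (simp add: prod.distrib mult_ac)
  also have "x * x ^ (card (UNIV :: 'a set) - 1) = x ^ Suc (card (UNIV :: 'a set) - 1)"
    by (subst power_Suc) auto
  also have "Suc (card (UNIV :: 'a set) - 1) = card (UNIV :: 'a set)"
    using finite_UNIV_card_ge_0[where ?'a = 'a] by simp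
  also have "(\<Prod>y\<in>UNIV-{0}. x * y) = (\<Prod>y\<in>UNIV-{0}. y)"
    by (rule prod.reindex_bij_witness[of _ "\<lambda>y. y / x" "\<lambda>y. x * y"]) (use False in auto)
  finally show ?thesis
    by simp
qed (use finite_UNIV_card_ge_0[where ?'a = 'a] in auto)

lemma frob_sum:
  fixes f :: "nat \<Rightarrow> 'a::{finite,field}"
  assumes "prime_power q" "CARD('a) = q ^ h" "h > 0"
  shows "(\<Sum>i<n. f i) ^ q = (\<Sum>i<n. f i ^ q)"
proof (induction n)
  case 0
  have "q > 0" using assms(1) unfolding prime_power_def using prime_gt_0_nat by auto
  then show ?case by simp
next
  case (Suc n)
  then show ?case using frob_add[OF assms, of _ _ 1] by simp
qed

lemma fq_power: "c \<in> subfield_q q \<Longrightarrow> c ^ (q ^ i) = c"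
proof (induction i)
  case (Suc i)
  have "c ^ (q ^ Suc i) = (c ^ (q ^ i)) ^ q" by (simp add: power_mult[symmetric] mult.commute)
  then show ?case using Suc by (simp add: subfield_q_def)
qed simp

lemma tr_facts:
  fixes x y c :: "'a::{finite,field}"
  assumes pp: "prime_power q" and card: "CARD('a) = q ^ h" and h: "h > 0"
  shows tr_add: "trace_rel q h (x + y) = trace_rel q h x + trace_rel q h y"
    and fq_add: "x \<in> subfield_q q \<Longrightarrow> y \<in> subfield_q q \<Longrightarrow> x + y \<in> subfield_q q"
    and tr_fq: "trace_rel q h x \<in> subfield_q q"
    and tr_lin: "c \<in> subfield_q q \<Longrightarrow> trace_rel q h (c * x) = c * trace_rel q h x"
    and tr0: "trace_rel q h 0 = 0"
proof -
  have q0: "q > 0" using pp unfolding prime_power_def using prime_gt_0_nat by auto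
  show "trace_rel q h (x + y) = trace_rel q h x + trace_rel q h y"
    unfolding trace_rel_def using frob_add[OF assms] by (simp add: sum.distrib)
  show "x \<in> subfield_q q \<Longrightarrow> y \<in> subfield_q q \<Longrightarrow> x + y \<in> subfield_q q"
    unfolding subfield_q_def using frob_add[OF assms, of x y 1] by simp
  show "trace_rel q h 0 = 0" unfolding trace_rel_def using q0 by (intro sum.neutral) simp
  show "c \<in> subfield_q q \<Longrightarrow> trace_rel q h (c * x) = c * trace_rel q h x"
    unfolding trace_rel_def by (simp add: power_mult_distrib fq_power sum_distrib_left)
  define g where "g i = x ^ (q ^ i)" for i
  have gS: "g (Suc i) = g i ^ q" for i unfolding g_def by (simp add: power_mult[symmetric] mult.commute)
  have gh: "g h = g 0" unfolding g_def using fin_power_card_same[of x] card by simp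
  have "(\<Sum>i<h. g i) ^ q = (\<Sum>i<h. g (Suc i))" using frob_sum[OF assms, of g h] gS by simp
  also have "\<dots> = (\<Sum>i<Suc h. g i) - g 0" by (subst sum.lessThan_Suc_shift) simp
  also have "\<dots> = (\<Sum>i<h. g i)" using gh by simp
  finally show "trace_rel q h x \<in> subfield_q q" unfolding subfield_q_def trace_rel_def g_def by simp
qed


definition stdv :: "nat \<Rightarrow> nat \<Rightarrow> 'a::field \<Rightarrow> 'a \<Rightarrow> 'a^3" where
  "stdv q h x y = vector [x, trace_rel q h x, y]"

lemma stdv_nz: "(x, y) \<noteq> (0, 0) \<Longrightarrow> stdv q h x y \<noteq> 0"
  by (auto simp: stdv_def vec_eq_iff forall_3)

lemma mv_scale: "(M :: 'a::field^3^3) *v (c *s v) = c *s (M *v v)"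
  by (simp add: vec_eq_iff matrix_vector_mult_def sum_distrib_left mult_ac)

lemma inv_inj: "invertible (M :: 'a::field^3^3) \<Longrightarrow> M *v v = 0 \<Longrightarrow> v = 0"
  unfolding invertible_def by (metis matrix_vector_mul_assoc matrix_vector_mul_lid matrix_vector_mult_0_right)

lemma mem_img:
  "X \<in> proj_image M (trace_set q h) \<longleftrightarrow>
    (\<exists>x y. y \<in> subfield_q q \<and> (x, y) \<noteq> (0, 0) \<and> X = proj_pt (M *v stdv q h x y))"
proof
  assume "X \<in> proj_image M (trace_set q h)"
  then obtain v where v: "v \<noteq> 0" "proj_pt v \<in> trace_set q h" "X = proj_pt (M *v v)"
    unfolding proj_image_def by blast
  then obtain x y where xy: "y \<in> subfield_q q" "(x, y) \<noteq> (0, 0)" "proj_pt v = proj_pt (stdv q h x y)"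
    unfolding trace_set_def stdv_def by blast
  then obtain c where c: "c \<noteq> 0" "v = c *s stdv q h x y" using proj_pt_eqD[of "stdv q h x y" v] by metis
  have "X = proj_pt (M *v stdv q h x y)" using v(3) c by (simp add: mv_scale proj_pt_scale)
  then show "\<exists>x y. y \<in> subfield_q q \<and> (x, y) \<noteq> (0, 0) \<and> X = proj_pt (M *v stdv q h x y)"
    using xy by blast
next
  assume "\<exists>x y. y \<in> subfield_q q \<and> (x, y) \<noteq> (0, 0) \<and> X = proj_pt (M *v stdv q h x y)"
  then obtain x y where xy: "y \<in> subfield_q q" "(x, y) \<noteq> (0, 0)" "X = proj_pt (M *v stdv q h x y)"
    by blast
  have "proj_pt (stdv q h x y) \<in> trace_set q h" unfolding trace_set_def stdv_def using xy by blast
  then show "X \<in> proj_image M (trace_set q h)"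
    unfolding proj_image_def
    by (intro CollectI exI[of _ "stdv q h x y"]) (use xy stdv_nz[OF xy(2)] in simp)
qed

lemma secant:
  fixes M :: "'a::{finite,field}^3^3"
  assumes pp: "prime_power q" and card: "CARD('a) = q ^ h" and h: "h > 0" and inv: "invertible M"
    and X: "X \<in> proj_image M (trace_set q h)" "X \<in> PG2_line u"
    and Y: "Y \<in> proj_image M (trace_set q h)" "Y \<in> PG2_line u" and XY: "X \<noteq> Y"
  shows "\<exists>Z \<in> proj_image M (trace_set q h). Z \<in> PG2_line u \<and> Z \<noteq> X \<and> Z \<noteq> Y"
proof -
  obtain x1 y1 where 1: "y1 \<in> subfield_q q" "(x1, y1) \<noteq> (0, 0)" "X = proj_pt (M *v stdv q h x1 y1)"
    using X(1) unfolding mem_img by blast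
  obtain x2 y2 where 2: "y2 \<in> subfield_q q" "(x2, y2) \<noteq> (0, 0)" "Y = proj_pt (M *v stdv q h x2 y2)"
    using Y(1) unfolding mem_img by blast
  define a where "a = M *v stdv q h x1 y1"
  define b where "b = M *v stdv q h x2 y2"
  have a0: "a \<noteq> 0" unfolding a_def using inv_inj[OF inv] stdv_nz[OF 1(2)] by blast
  have b0: "b \<noteq> 0" unfolding b_def using inv_inj[OF inv] stdv_nz[OF 2(2)] by blast
  have da: "dt u a = 0" using X(2) 1(3) in_line_iff[OF a0] a_def by simp
  have db: "dt u b = 0" using Y(2) 2(3) in_line_iff[OF b0] b_def by simp
  have sum: "stdv q h x1 y1 + stdv q h x2 y2 = stdv q h (x1 + x2) (y1 + y2)"
    by (simp add: stdv_def vec_eq_iff forall_3 tr_add[OF pp card h])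
  have ab: "a + b = M *v stdv q h (x1 + x2) (y1 + y2)"
    unfolding a_def b_def sum[symmetric] by (simp add: matrix_vector_right_distrib)
  have neg: False if "b = (-1) *s a"
  proof -
    have "Y = proj_pt ((-1) *s a)" using 2(3) b_def that by simp
    also have "\<dots> = X" using proj_pt_scale[of "-1::'a" a] 1(3) a_def by simp
    finally show False using XY by simp
  qed
  have ab0: "a + b \<noteq> 0"
  proof
    assume "a + b = 0"
    then have "b = (-1) *s a" by (simp add: vec_eq_iff) (metis add_eq_0_iff)
    then show False using neg by blast
  qed
  have nz: "(x1 + x2, y1 + y2) \<noteq> (0, 0)"
  proof
    assume "(x1 + x2, y1 + y2) = (0, 0)"
    then have "stdv q h (x1 + x2) (y1 + y2) = 0"
      by (simp add: stdv_def vec_eq_iff forall_3 tr0[OF pp card h])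
    then show False using ab ab0 by simp
  qed
  define Z where "Z = proj_pt (a + b)"
  have Zi: "Z \<in> proj_image M (trace_set q h)"
    unfolding mem_img Z_def ab using nz fq_add[OF pp card h 1(1) 2(1)] by blast
  have Zl: "Z \<in> PG2_line u" unfolding Z_def in_line_iff[OF ab0] dt_add da db by simp
  have ZX: "Z \<noteq> X"
  proof
    assume "Z = X"
    then have "proj_pt a = proj_pt (a + b)" unfolding Z_def 1(3) a_def by simp
    then obtain c where c: "c \<noteq> 0" "a + b = c *s a" using proj_pt_eqD by blast
    then have bc: "b = (c - 1) *s a" by (simp add: vec_eq_iff algebra_simps)
    then have "c - 1 \<noteq> 0" using b0 by auto
    then have "proj_pt b = proj_pt a" using bc proj_pt_scale by metis
    then have "Y = X" using 1(3) 2(3) a_def b_def by simp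
    then show False using XY by simp
  qed
  have ZY: "Z \<noteq> Y"
  proof
    assume "Z = Y"
    then have "proj_pt b = proj_pt (a + b)" unfolding Z_def 2(3) b_def by simp
    then obtain c where c: "c \<noteq> 0" "a + b = c *s b" using proj_pt_eqD by blast
    then have bc: "a = (c - 1) *s b" by (simp add: vec_eq_iff algebra_simps)
    then have "c - 1 \<noteq> 0" using a0 by auto
    then have "proj_pt a = proj_pt b" using bc proj_pt_scale by metis
    then have "Y = X" using 1(3) 2(3) a_def b_def by simp
    then show False using XY by simp
  qed
  show ?thesis using Zi Zl ZX ZY by blast
qed


lemma tr_roots:
  assumes q: "q > 1" and h: "h \<ge> 1"
  shows "card {z::'a::{finite,field}. trace_rel q h z = 1} \<le> q ^ (h - 1)"
proof -
  define P :: "'a poly" where "P = (\<Sum>i<h. Polynomial.monom 1 (q ^ i)) - 1"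
  have ev: "poly P z = trace_rel q h z - 1" for z
    by (simp add: P_def poly_sum poly_monom trace_rel_def)
  have deg: "degree P \<le> q ^ (h - 1)"
    unfolding P_def
  proof (rule degree_diff_le)
    show "degree (\<Sum>i<h. Polynomial.monom (1::'a) (q ^ i)) \<le> q ^ (h - 1)"
    proof (rule degree_sum_le)
      fix i assume "i \<in> {..<h}"
      then have "q ^ i \<le> q ^ (h - 1)" using q by (intro power_increasing) auto
      then show "degree (Polynomial.monom (1::'a) (q ^ i)) \<le> q ^ (h - 1)"
        using degree_monom_le[of "1::'a" "q ^ i"] by linarith
    qed simp
  qed simp
  have "Polynomial.coeff P (q ^ (h - 1)) = (\<Sum>i<h. if q ^ i = q ^ (h - 1) then 1 else 0)"
    using q by (simp add: P_def coeff_sum coeff_monom)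
  also have "\<dots> = (\<Sum>i<h. if i = h - 1 then 1 else 0)"
    using q by (intro sum.cong refl) (simp add: power_inject_exp)
  also have "\<dots> = (1::'a)" using h by simp
  finally have "P \<noteq> 0" by auto
  then have "card {x. poly P x = 0} \<le> degree P" by (rule card_poly_roots_bound)
  moreover have "{x. poly P x = 0} = {z. trace_rel q h z = 1}" by (auto simp: ev)
  ultimately show ?thesis using deg by simp
qed

lemma card_bound:
  fixes M :: "'a::{finite,field}^3^3"
  assumes pp: "prime_power q" and card: "CARD('a) = q ^ h" and h: "h \<ge> 1"
  shows "q * card (proj_image M (trace_set q h)) \<le> (q + 1) * CARD('a) + q"
proof -
  have h0: "h > 0" using h by simp
  have q1: "q > 1" using pp unfolding prime_power_def
    by (metis one_less_power prime_gt_1_nat)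
  define T1 where "T1 = {z::'a. trace_rel q h z = 1}"
  define A where "A = (\<lambda>x. proj_pt (M *v stdv q h x 1)) ` UNIV"
  define B where "B = (\<lambda>z. proj_pt (M *v vector [z, 1, 0])) ` T1"
  define C where "C = {proj_pt (M *v vector [1, 0, 0])}"
  have sub: "proj_image M (trace_set q h) \<subseteq> A \<union> B \<union> C"
  proof
    fix X assume "X \<in> proj_image M (trace_set q h)"
    then obtain x y where xy: "y \<in> subfield_q q" "(x, y) \<noteq> (0, 0)" "X = proj_pt (M *v stdv q h x y)"
      unfolding mem_img by blast
    show "X \<in> A \<union> B \<union> C"
    proof (cases "y = 0")
      case False
      have iy: "1 / y \<in> subfield_q q" using xy(1) by (simp add: subfield_q_def power_one_over)
      have "trace_rel q h (x / y) = trace_rel q h ((1 / y) * x)" by simp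
      also have "\<dots> = (1 / y) * trace_rel q h x" by (rule tr_lin[OF pp card h0 iy])
      finally have tr: "trace_rel q h (x / y) = trace_rel q h x / y" by simp
      have "stdv q h x y = y *s stdv q h (x / y) 1"
        using False by (simp add: stdv_def vec_eq_iff forall_3 tr)
      then have "X = proj_pt (M *v stdv q h (x / y) 1)"
        using xy(3) False by (simp add: mv_scale proj_pt_scale)
      then show ?thesis unfolding A_def by blast
    next
      case True
      show ?thesis
      proof (cases "trace_rel q h x = 0")
        case False
        define c where "c = trace_rel q h x"
        have cf: "c \<in> subfield_q q" unfolding c_def by (rule tr_fq[OF pp card h0])
        have ic: "1 / c \<in> subfield_q q" using cf by (simp add: subfield_q_def power_one_over)
        have "trace_rel q h (x / c) = trace_rel q h ((1 / c) * x)" by simp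
        also have "\<dots> = (1 / c) * c" unfolding c_def by (rule tr_lin[OF pp card h0 ic[unfolded c_def]])
        finally have tr: "trace_rel q h (x / c) = 1" using False c_def by simp
        have "stdv q h x y = c *s vector [x / c, 1, 0]"
          using False True by (simp add: stdv_def vec_eq_iff forall_3 c_def)
        then have "X = proj_pt (M *v vector [x / c, 1, 0])"
          using xy(3) False c_def by (simp add: mv_scale proj_pt_scale)
        then show ?thesis unfolding B_def T1_def using tr by blast
      next
        case tr0: True
        then have x0: "x \<noteq> 0" using True xy(2) by auto
        have "stdv q h x y = x *s vector [1, 0, 0]"
          using tr0 True by (simp add: stdv_def vec_eq_iff forall_3)
        then have "X = proj_pt (M *v vector [1, 0, 0])"
          using xy(3) x0 by (simp add: mv_scale proj_pt_scale)
        then show ?thesis unfolding C_def by blast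
      qed
    qed
  qed
  have "card (proj_image M (trace_set q h)) \<le> card (A \<union> B \<union> C)"
    by (rule card_mono[OF _ sub]) simp
  also have "\<dots> \<le> card A + card B + card C"
    by (meson add_le_mono card_Un_le dual_order.trans le_refl)
  also have "\<dots> \<le> CARD('a) + card T1 + 1"
    unfolding A_def B_def C_def
    by (intro add_le_mono card_image_le) auto
  finally have c1: "card (proj_image M (trace_set q h)) \<le> CARD('a) + card T1 + 1" .
  have "card T1 \<le> q ^ (h - 1)" unfolding T1_def by (rule tr_roots[OF q1 h])
  then have "q * card T1 \<le> q * q ^ (h - 1)" by simp
  also have "\<dots> = CARD('a)" using card h by (simp add: power_Suc[symmetric])
  finally have c2: "q * card T1 \<le> CARD('a)" .
  have "q * card (proj_image M (trace_set q h)) \<le> q * (CARD('a) + card T1 + 1)"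
    using mult_le_mono2[OF c1, of q] by simp
  also have "\<dots> = q * CARD('a) + q * card T1 + q" by (simp add: algebra_simps)
  also have "\<dots> \<le> (q + 1) * CARD('a) + q" using c2 by simp
  finally show ?thesis .
qed


lemma two_le_card: "finite S \<Longrightarrow> X \<in> S \<Longrightarrow> Y \<in> S \<Longrightarrow> X \<noteq> Y \<Longrightarrow> 2 \<le> card S"
  using card_mono[of S "{X, Y}"] by auto

lemma three_le_card: "finite S \<Longrightarrow> X \<in> S \<Longrightarrow> Y \<in> S \<Longrightarrow> Z \<in> S \<Longrightarrow> X \<noteq> Y \<Longrightarrow> Z \<noteq> X \<Longrightarrow> Z \<noteq> Y
   \<Longrightarrow> 3 \<le> card S"
  using card_mono[of S "{X, Y, Z}"] by auto

lemma key_count: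
  fixes l :: "'t::finite \<Rightarrow> 'p set" and L1 L2 L3 :: "'p set"
  assumes fin: "finite L1" "finite L2" "finite L3"
    and P: "P \<in> L1" "P \<notin> L2" "P \<notin> L3"
    and cover: "\<And>X. X \<in> L1 \<union> L2 \<union> L3 \<Longrightarrow> X \<noteq> P \<Longrightarrow> \<exists>t. X \<in> l t"
    and disj: "\<And>X s t. X \<in> l s \<Longrightarrow> X \<in> l t \<Longrightarrow> X \<noteq> P \<Longrightarrow> s = t"
    and blk2: "\<And>t. L2 \<inter> l t \<noteq> {}" and blk3: "\<And>t. L3 \<inter> l t \<noteq> {}"
    and sec1: "\<And>t X. X \<in> L1 \<inter> l t \<Longrightarrow> X \<noteq> P \<Longrightarrow> \<exists>Y\<in>L1 \<inter> l t. Y \<noteq> P \<and> Y \<noteq> X"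
    and sec2: "\<And>t X Y. X \<in> L2 \<inter> l t \<Longrightarrow> Y \<in> L2 \<inter> l t \<Longrightarrow> X \<noteq> Y \<Longrightarrow> \<exists>Z\<in>L2 \<inter> l t. Z \<noteq> X \<and> Z \<noteq> Y"
    and sec3: "\<And>t X Y. X \<in> L3 \<inter> l t \<Longrightarrow> Y \<in> L3 \<inter> l t \<Longrightarrow> X \<noteq> Y \<Longrightarrow> \<exists>Z\<in>L3 \<inter> l t. Z \<noteq> X \<and> Z \<noteq> Y"
    and bound: "card L1 + card L2 + card L3 \<le> 4 * CARD('t)"
  shows "\<exists>t. L1 \<inter> l t \<subseteq> {P} \<and> card (L2 \<inter> l t) = 1 \<and> card (L3 \<inter> l t) = 1"
proof (rule ccontr)
  assume H: "\<not> ?thesis"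
  define a where "a t = card (L1 \<inter> l t - {P})" for t
  define b where "b t = card (L2 \<inter> l t)" for t
  define c where "c t = card (L3 \<inter> l t)" for t
  have bigb: "3 \<le> b t" if "b t \<noteq> 1" for t
  proof -
    have f: "finite (L2 \<inter> l t)" using fin by simp
    have "card (L2 \<inter> l t) > 0" using blk2[of t] f by (simp add: card_gt_0_iff)
    then have "\<not> card (L2 \<inter> l t) \<le> Suc 0" using that unfolding b_def by linarith
    then obtain X Y where XY: "X \<in> L2 \<inter> l t" "Y \<in> L2 \<inter> l t" "X \<noteq> Y"
      using card_le_Suc0_iff_eq[OF f] by blast
    then obtain Z where "Z \<in> L2 \<inter> l t" "Z \<noteq> X" "Z \<noteq> Y" using sec2 by blast
    then show ?thesis unfolding b_def using three_le_card[OF f] XY by blast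
  qed
  have bigc: "3 \<le> c t" if "c t \<noteq> 1" for t
  proof -
    have f: "finite (L3 \<inter> l t)" using fin by simp
    have "card (L3 \<inter> l t) > 0" using blk3[of t] f by (simp add: card_gt_0_iff)
    then have "\<not> card (L3 \<inter> l t) \<le> Suc 0" using that unfolding c_def by linarith
    then obtain X Y where XY: "X \<in> L3 \<inter> l t" "Y \<in> L3 \<inter> l t" "X \<noteq> Y"
      using card_le_Suc0_iff_eq[OF f] by blast
    then obtain Z where "Z \<in> L3 \<inter> l t" "Z \<noteq> X" "Z \<noteq> Y" using sec3 by blast
    then show ?thesis unfolding c_def using three_le_card[OF f] XY by blast
  qed
  have pw: "4 \<le> a t + b t + c t" for t
  proof -
    have b1: "1 \<le> b t" unfolding b_def using blk2[of t] fin by (simp add: Suc_le_eq card_gt_0_iff)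
    have c1: "1 \<le> c t" unfolding c_def using blk3[of t] fin by (simp add: Suc_le_eq card_gt_0_iff)
    show ?thesis
    proof (cases "L1 \<inter> l t \<subseteq> {P}")
      case False
      then obtain X where X: "X \<in> L1 \<inter> l t" "X \<noteq> P" by blast
      then obtain Y where Y: "Y \<in> L1 \<inter> l t" "Y \<noteq> P" "Y \<noteq> X" using sec1 by blast
      have "2 \<le> a t" unfolding a_def using two_le_card[of "L1 \<inter> l t - {P}" X Y] X Y fin by auto
      then show ?thesis using b1 c1 by simp
    next
      case True
      then have "\<not> (card (L2 \<inter> l t) = 1 \<and> card (L3 \<inter> l t) = 1)" using H by blast
      then have "b t \<noteq> 1 \<or> c t \<noteq> 1" unfolding b_def c_def by simp
      then show ?thesis using bigb bigc b1 c1 by fastforce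
    qed
  qed
  have sa: "(\<Sum>t\<in>UNIV. a t) = card (L1 - {P})"
  proof -
    have "L1 - {P} = (\<Union>t\<in>UNIV. L1 \<inter> l t - {P})"
    proof (intro equalityI subsetI)
      fix X assume "X \<in> L1 - {P}"
      then obtain t where "X \<in> l t" using cover[of X] by blast
      then show "X \<in> (\<Union>t\<in>UNIV. L1 \<inter> l t - {P})" using \<open>X \<in> L1 - {P}\<close> by blast
    qed blast
    then have "card (L1 - {P}) = card (\<Union>t\<in>UNIV. L1 \<inter> l t - {P})" by simp
    also have "\<dots> = (\<Sum>t\<in>UNIV. card (L1 \<inter> l t - {P}))"
      by (rule card_UN_disjoint) (use fin in simp, use fin in simp, use disj in blast)
    finally show ?thesis unfolding a_def by simp
  qed
  have sb: "(\<Sum>t\<in>UNIV. b t) = card L2"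
  proof -
    have "L2 = (\<Union>t\<in>UNIV. L2 \<inter> l t)"
    proof (intro equalityI subsetI)
      fix X assume X: "X \<in> L2"
      then have "X \<noteq> P" using P by blast
      then obtain t where "X \<in> l t" using cover[of X] X by blast
      then show "X \<in> (\<Union>t\<in>UNIV. L2 \<inter> l t)" using X by blast
    qed blast
    then have "card L2 = card (\<Union>t\<in>UNIV. L2 \<inter> l t)" by simp
    also have "\<dots> = (\<Sum>t\<in>UNIV. card (L2 \<inter> l t))"
      by (rule card_UN_disjoint) (use fin in simp, use fin in simp, use disj P in blast)
    finally show ?thesis unfolding b_def by simp
  qed
  have sc: "(\<Sum>t\<in>UNIV. c t) = card L3"
  proof -
    have "L3 = (\<Union>t\<in>UNIV. L3 \<inter> l t)"
    proof (intro equalityI subsetI)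
      fix X assume X: "X \<in> L3"
      then have "X \<noteq> P" using P by blast
      then obtain t where "X \<in> l t" using cover[of X] X by blast
      then show "X \<in> (\<Union>t\<in>UNIV. L3 \<inter> l t)" using X by blast
    qed blast
    then have "card L3 = card (\<Union>t\<in>UNIV. L3 \<inter> l t)" by simp
    also have "\<dots> = (\<Sum>t\<in>UNIV. card (L3 \<inter> l t))"
      by (rule card_UN_disjoint) (use fin in simp, use fin in simp, use disj P in blast)
    finally show ?thesis unfolding c_def by simp
  qed
  have "4 * CARD('t) = (\<Sum>t\<in>(UNIV::'t set). 4)" by simp
  also have "\<dots> \<le> (\<Sum>t\<in>UNIV. a t + b t + c t)" by (rule sum_mono) (rule pw)
  also have "\<dots> = card (L1 - {P}) + card L2 + card L3" by (simp add: sum.distrib sa sb sc)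
  also have "\<dots> = card L1 - 1 + card L2 + card L3" using P fin by simp
  moreover have "card L1 > 0" using P fin by (auto simp: card_gt_0_iff)
  ultimately show False using bound by linarith
qed

definition good :: "('a::field^3) set set \<Rightarrow> bool" where
  "good L \<longleftrightarrow> L \<subseteq> PG2_points \<and> (\<forall>l\<in>PG2_lines. L \<inter> l \<noteq> {}) \<and>
     (\<forall>l\<in>PG2_lines. \<forall>X\<in>L \<inter> l. \<forall>Y\<in>L \<inter> l. X \<noteq> Y \<longrightarrow> (\<exists>Z\<in>L \<inter> l. Z \<noteq> X \<and> Z \<noteq> Y))"

lemma goodD1: "good L \<Longrightarrow> L \<subseteq> PG2_points"
  unfolding good_def by simp

lemma goodD2: "good L \<Longrightarrow> l \<in> PG2_lines \<Longrightarrow> L \<inter> l \<noteq> {}"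
  unfolding good_def by (elim conjE) (drule (1) bspec)

lemma goodD3: "good L \<Longrightarrow> l \<in> PG2_lines \<Longrightarrow> X \<in> L \<inter> l \<Longrightarrow> Y \<in> L \<inter> l \<Longrightarrow> X \<noteq> Y
   \<Longrightarrow> \<exists>Z\<in>L \<inter> l. Z \<noteq> X \<and> Z \<noteq> Y"
  unfolding good_def by (elim conjE) (drule (1) bspec, drule (1) bspec, drule (1) bspec, blast)

lemma card_option: "CARD('a::finite option) = CARD('a) + 1"
proof -
  have "(UNIV :: 'a option set) = insert None (range Some)" by (rule UNIV_option_conv)
  then have "CARD('a option) = card (insert None (range (Some :: 'a \<Rightarrow> _)))" by simp
  also have "\<dots> = Suc (card (range (Some :: 'a \<Rightarrow> _)))" by (rule card_insert_disjoint) auto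
  also have "card (range (Some :: 'a \<Rightarrow> _)) = CARD('a)" by (rule card_image) simp
  finally show ?thesis by simp
qed

lemma geom_key:
  fixes L1 L2 L3 :: "('a::{finite,field}^3) set set"
  assumes gd: "good L1" "good L2" "good L3"
    and bound: "card L1 + card L2 + card L3 \<le> 4 * (CARD('a) + 1)"
    and P: "P \<in> L1" "P \<notin> L2" "P \<notin> L3"
  shows "\<exists>l\<in>PG2_lines. P \<in> l \<and> L1 \<inter> l = {P} \<and> card (L2 \<inter> l) = 1 \<and> card (L3 \<inter> l) = 1"
proof -
  have "P \<in> PG2_points" using gd(1) P(1) unfolding good_def by (simp add: subset_iff)
  then obtain p where p: "p \<noteq> 0" "P = proj_pt p" using points_elem by blast
  obtain f g where fg0: "dt f p = 0 \<and> dt g p = 0 \<and> g \<noteq> 0 \<and> (\<forall>t. f - t *s g \<noteq> 0) \<and>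
     (\<forall>v. dt f v = 0 \<and> dt g v = 0 \<longrightarrow> (\<exists>c. v = c *s p))"
    using pencil[OF p(1)] by (elim exE) (rule that)
  have fg: "dt f p = 0" "dt g p = 0" "g \<noteq> 0" "\<And>t. f - t *s g \<noteq> 0"
    "\<And>v. dt f v = 0 \<Longrightarrow> dt g v = 0 \<Longrightarrow> \<exists>c. v = c *s p"
    using fg0 by auto
  define lu where "lu t = (case t of None \<Rightarrow> g | Some s \<Rightarrow> f - s *s g)" for t
  define l where "l t = PG2_line (lu t)" for t
  have lunz: "lu t \<noteq> 0" for t unfolding lu_def using fg by (cases t) auto
  have lines: "l t \<in> PG2_lines" for t unfolding l_def using line_in_lines[OF lunz] .
  have Pl: "P \<in> l t" for t
    unfolding l_def p(2) in_line_iff[OF p(1)] lu_def using fg by (cases t) (auto simp: dt_ldiff)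
  have notP: False if nv: "v \<noteq> 0" "proj_pt v \<noteq> P" "dt f v = 0" "dt g v = 0" for v
  proof -
    obtain c where c: "v = c *s p" using fg(5) nv(3,4) by blast
    then have "c \<noteq> 0" using nv(1) by auto
    then have "proj_pt v = P" using c p(2) proj_pt_scale by simp
    then show False using nv(2) by simp
  qed
  have cover: "\<exists>t. X \<in> l t" if cv: "X \<in> PG2_points" "X \<noteq> P" for X
  proof -
    obtain v where v: "v \<noteq> 0" "X = proj_pt v" using points_elem cv(1) by blast
    show ?thesis
    proof (cases "dt g v = 0")
      case True
      then have "X \<in> l None" unfolding l_def lu_def v(2) in_line_iff[OF v(1)] by simp
      then show ?thesis by blast
    next
      case False
      then have "X \<in> l (Some (dt f v / dt g v))"
        unfolding l_def lu_def v(2) in_line_iff[OF v(1)] by (simp add: dt_ldiff)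
      then show ?thesis by blast
    qed
  qed
  have disj: "s = t" if dj: "X \<in> l s" "X \<in> l t" "X \<noteq> P" for X s t
  proof -
    obtain v where v: "v \<noteq> 0" "X = proj_pt v" "dt (lu s) v = 0"
      using line_elem dj(1) unfolding l_def by blast
    have vt: "dt (lu t) v = 0" using dj(2) unfolding l_def v(2) in_line_iff[OF v(1)] .
    have nb: "\<not> (dt f v = 0 \<and> dt g v = 0)" using notP[of v] v(1,2) dj(3) by blast
    have uniq: "r = (if dt g v = 0 then None else Some (dt f v / dt g v))" if r: "dt (lu r) v = 0" for r
    proof (cases r)
      case None
      then show ?thesis using r by (simp add: lu_def)
    next
      case (Some r')
      then have e: "dt f v - r' * dt g v = 0" using r by (simp add: lu_def dt_ldiff)
      show ?thesis
      proof (cases "dt g v = 0")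
        case True
        then show ?thesis using e nb by simp
      next
        case False
        then show ?thesis using e Some by (simp add: field_simps)
      qed
    qed
    show "s = t" using uniq[OF v(3)] uniq[OF vt] by simp
  qed
  have gL2: "L \<inter> l t \<noteq> {}" if "good L" for L t by (rule goodD2[OF that lines])
  have gL3: "\<exists>Z\<in>L \<inter> l t. Z \<noteq> X \<and> Z \<noteq> Y"
    if "good L" "X \<in> L \<inter> l t" "Y \<in> L \<inter> l t" "X \<noteq> Y" for L t X Y
    by (rule goodD3[OF that(1) lines that(2-4)])
  have "\<exists>t. L1 \<inter> l t \<subseteq> {P} \<and> card (L2 \<inter> l t) = 1 \<and> card (L3 \<inter> l t) = 1"
  proof (rule key_count[where l = l])
    show "finite L1" "finite L2" "finite L3" by simp_all
    show "P \<in> L1" "P \<notin> L2" "P \<notin> L3" by fact+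
    show "\<exists>t. X \<in> l t" if xx: "X \<in> L1 \<union> L2 \<union> L3" "X \<noteq> P" for X
    proof -
      have "X \<in> PG2_points" using xx(1) goodD1[OF gd(1)] goodD1[OF gd(2)] goodD1[OF gd(3)] by blast
      then show ?thesis using cover xx(2) by blast
    qed
    show "s = t" if "X \<in> l s" "X \<in> l t" "X \<noteq> P" for X s t by (rule disj[OF that])
    show "L2 \<inter> l t \<noteq> {}" for t by (rule gL2[OF gd(2)])
    show "L3 \<inter> l t \<noteq> {}" for t by (rule gL2[OF gd(3)])
    show "\<exists>Y\<in>L1 \<inter> l t. Y \<noteq> P \<and> Y \<noteq> X" if xx: "X \<in> L1 \<inter> l t" "X \<noteq> P" for t X
    proof -
      have "P \<in> L1 \<inter> l t" using P(1) Pl[of t] by blast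
      then obtain Z where "Z \<in> L1 \<inter> l t" "Z \<noteq> P" "Z \<noteq> X" using gL3[OF gd(1) _ xx(1)] xx(2) by metis
      then show ?thesis by blast
    qed
    show "\<exists>Z\<in>L2 \<inter> l t. Z \<noteq> X \<and> Z \<noteq> Y" if "X \<in> L2 \<inter> l t" "Y \<in> L2 \<inter> l t" "X \<noteq> Y" for t X Y
      by (rule gL3[OF gd(2) that])
    show "\<exists>Z\<in>L3 \<inter> l t. Z \<noteq> X \<and> Z \<noteq> Y" if "X \<in> L3 \<inter> l t" "Y \<in> L3 \<inter> l t" "X \<noteq> Y" for t X Y
      by (rule gL3[OF gd(3) that])
    show "card L1 + card L2 + card L3 \<le> 4 * CARD('a option)" using bound by (simp add: card_option)
  qed
  then obtain t where t: "L1 \<inter> l t \<subseteq> {P}" "card (L2 \<inter> l t) = 1" "card (L3 \<inter> l t) = 1" by blast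
  have e: "L1 \<inter> l t = {P}" using t(1) P(1) Pl[of t] by auto
  show ?thesis
    by (rule bexI[where x = "l t"]) (use e t(2,3) Pl[of t] lines[of t] in simp_all)
qed


lemma arith3:
  fixes q N a b c :: nat
  assumes q: "q \<ge> 3" and a: "q * a \<le> (q + 1) * N + q" and b: "q * b \<le> (q + 1) * N + q"
    and c: "q * c \<le> (q + 1) * N + q"
  shows "a + b + c \<le> 4 * (N + 1)"
proof -
  have "3 * N \<le> q * N" using q by (rule mult_le_mono1)
  have "q * (a + b + c) = q * a + q * b + q * c" by (simp add: algebra_simps)
  also have "\<dots> \<le> ((q + 1) * N + q) + ((q + 1) * N + q) + ((q + 1) * N + q)"
    using add_mono[OF add_mono[OF a b] c] .
  also have "\<dots> = 3 * ((q + 1) * N + q)" by simp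
  also have "\<dots> = 3 * q * N + 3 * N + 3 * q" by (simp add: algebra_simps)
  also have "\<dots> \<le> 3 * q * N + q * N + 4 * q" using \<open>3 * N \<le> q * N\<close> by linarith
  also have "\<dots> = q * (4 * (N + 1))" by (simp add: algebra_simps)
  finally show ?thesis using q by simp
qed

lemma good_of:
  fixes M :: "'a::{finite,field}^3^3"
  assumes pp: "prime_power q" and card: "CARD('a) = q ^ h" and h: "h > 0" and inv: "invertible M"
    and bl: "blocking_set L" and L: "L = proj_image M (trace_set q h)"
  shows "good L"
  unfolding good_def
proof (intro conjI)
  show "L \<subseteq> PG2_points" using bl unfolding blocking_set_def t_fold_blocking_def by simp
  show "\<forall>l\<in>PG2_lines. L \<inter> l \<noteq> {}"
  proof
    fix l :: "('a^3) set set" assume l: "l \<in> PG2_lines"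
    then have "card (L \<inter> l) \<ge> 1" using bl unfolding blocking_set_def t_fold_blocking_def by simp
    then show "L \<inter> l \<noteq> {}" by auto
  qed
  show "\<forall>l\<in>PG2_lines. \<forall>X\<in>L \<inter> l. \<forall>Y\<in>L \<inter> l. X \<noteq> Y \<longrightarrow> (\<exists>Z\<in>L \<inter> l. Z \<noteq> X \<and> Z \<noteq> Y)"
  proof (intro ballI impI)
    fix l :: "('a^3) set set" and X Y
    assume l: "l \<in> PG2_lines" and X: "X \<in> L \<inter> l" and Y: "Y \<in> L \<inter> l" and XY: "X \<noteq> Y"
    obtain u where u: "l = PG2_line u" using l unfolding PG2_lines_def by blast
    show "\<exists>Z\<in>L \<inter> l. Z \<noteq> X \<and> Z \<noteq> Y"
      using secant[OF pp card h inv, of X u Y] X Y XY unfolding L u by blast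
  qed
qed

lemma card_int3: "card ((A \<union> B \<union> C) \<inter> l) \<le> card (A \<inter> l) + card (B \<inter> l) + card (C \<inter> l)"
proof -
  have e: "(A \<union> B \<union> C) \<inter> l = (A \<inter> l) \<union> (B \<inter> l) \<union> (C \<inter> l)" by blast
  have 1: "card ((A \<inter> l) \<union> (B \<inter> l) \<union> (C \<inter> l)) \<le> card ((A \<inter> l) \<union> (B \<inter> l)) + card (C \<inter> l)"
    by (rule card_Un_le)
  have 2: "card ((A \<inter> l) \<union> (B \<inter> l)) \<le> card (A \<inter> l) + card (B \<inter> l)" by (rule card_Un_le)
  show ?thesis unfolding e using 1 2 by linarith
qed

lemma tangent3:
  fixes L1 L2 L3 :: "('a::{finite,field}^3) set set"
  assumes gd: "good L1" "good L2" "good L3"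
    and d: "L1 \<inter> L2 = {}" "L1 \<inter> L3 = {}" "L2 \<inter> L3 = {}"
    and bound: "card L1 + card L2 + card L3 \<le> 4 * (CARD('a) + 1)"
    and P: "P \<in> L1 \<union> L2 \<union> L3"
  shows "\<exists>l\<in>PG2_lines. P \<in> l \<and> card ((L1 \<union> L2 \<union> L3) \<inter> l) \<le> 3"
proof -
  consider "P \<in> L1" | "P \<in> L2" | "P \<in> L3" using P by blast
  then show ?thesis
  proof cases
    case 1
    then have "P \<notin> L2" "P \<notin> L3" using d by blast+
    obtain l :: "('a^3) set set" where l: "l \<in> PG2_lines" "P \<in> l" "L1 \<inter> l = {P}" "card (L2 \<inter> l) = 1" "card (L3 \<inter> l) = 1"
      using geom_key[OF gd(1) gd(2) gd(3) bound 1 \<open>P \<notin> L2\<close> \<open>P \<notin> L3\<close>]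
      by (elim bexE conjE) (rule that)
    have "card ((L1 \<union> L2 \<union> L3) \<inter> l) \<le> 3" using card_int3[of L1 L2 L3 l] l by simp
    then show ?thesis using l(1,2) by (intro bexI[of _ l] conjI)
  next
    case 2
    then have "P \<notin> L1" "P \<notin> L3" using d by blast+
    have b: "card L2 + card L1 + card L3 \<le> 4 * (CARD('a) + 1)" using bound by simp
    obtain l :: "('a^3) set set" where l: "l \<in> PG2_lines" "P \<in> l" "L2 \<inter> l = {P}" "card (L1 \<inter> l) = 1" "card (L3 \<inter> l) = 1"
      using geom_key[OF gd(2) gd(1) gd(3) b 2 \<open>P \<notin> L1\<close> \<open>P \<notin> L3\<close>]
      by (elim bexE conjE) (rule that)
    have "card ((L1 \<union> L2 \<union> L3) \<inter> l) \<le> 3" using card_int3[of L1 L2 L3 l] l by simp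
    then show ?thesis using l(1,2) by (intro bexI[of _ l] conjI)
  next
    case 3
    then have "P \<notin> L1" "P \<notin> L2" using d by blast+
    have b: "card L3 + card L1 + card L2 \<le> 4 * (CARD('a) + 1)" using bound by simp
    obtain l :: "('a^3) set set" where l: "l \<in> PG2_lines" "P \<in> l" "L3 \<inter> l = {P}" "card (L1 \<inter> l) = 1" "card (L2 \<inter> l) = 1"
      using geom_key[OF gd(3) gd(1) gd(2) b 3 \<open>P \<notin> L1\<close> \<open>P \<notin> L2\<close>]
      by (elim bexE conjE) (rule that)
    have "card ((L1 \<union> L2 \<union> L3) \<inter> l) \<le> 3" using card_int3[of L1 L2 L3 l] l by simp
    then show ?thesis using l(1,2) by (intro bexI[of _ l] conjI)
  qed
qed

theorem proposition2p12:
  fixes q h :: nat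
    and L1 L2 L3 :: "('a::{finite,field} ^ 3) set set"
  assumes "prime_power q" and "q > 2" and "h \<ge> 2"
    and "CARD('a) = q ^ h"
    and "blocking_set L1" and "blocking_set L2" and "blocking_set L3"
    and "L1 \<inter> L2 = {}" and "L1 \<inter> L3 = {}" and "L2 \<inter> L3 = {}"
    and "proj_equivalent (trace_set q h) L1"
    and "proj_equivalent (trace_set q h) L2"
    and "proj_equivalent (trace_set q h) L3"
  shows "minimal_t_fold_blocking 3 (L1 \<union> L2 \<union> L3)"
proof -
  note pp = assms(1) and card = assms(4)
  have h0: "h > 0" and h1: "h \<ge> 1" using assms(3) by auto
  have q3: "q \<ge> 3" using assms(2) by simp
  obtain M1 where M1: "invertible M1" "L1 = proj_image M1 (trace_set q h)"
    using assms(11) unfolding proj_equivalent_def by blast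
  obtain M2 where M2: "invertible M2" "L2 = proj_image M2 (trace_set q h)"
    using assms(12) unfolding proj_equivalent_def by blast
  obtain M3 where M3: "invertible M3" "L3 = proj_image M3 (trace_set q h)"
    using assms(13) unfolding proj_equivalent_def by blast
  have g1: "good L1" by (rule good_of[OF pp card h0 M1(1) assms(5) M1(2)])
  have g2: "good L2" by (rule good_of[OF pp card h0 M2(1) assms(6) M2(2)])
  have g3: "good L3" by (rule good_of[OF pp card h0 M3(1) assms(7) M3(2)])
  have c1: "q * card L1 \<le> (q + 1) * CARD('a) + q" unfolding M1(2) by (rule card_bound[OF pp card h1])
  have c2: "q * card L2 \<le> (q + 1) * CARD('a) + q" unfolding M2(2) by (rule card_bound[OF pp card h1])
  have c3: "q * card L3 \<le> (q + 1) * CARD('a) + q" unfolding M3(2) by (rule card_bound[OF pp card h1])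
  have bound: "card L1 + card L2 + card L3 \<le> 4 * (CARD('a) + 1)" by (rule arith3[OF q3 c1 c2 c3])
  define B where "B = L1 \<union> L2 \<union> L3"
  have sub: "B \<subseteq> PG2_points" unfolding B_def using goodD1[OF g1] goodD1[OF g2] goodD1[OF g3] by blast
  have tb: "t_fold_blocking 3 B"
    unfolding t_fold_blocking_def
  proof (intro conjI ballI)
    show "B \<subseteq> PG2_points" by (rule sub)
    fix l :: "('a^3) set set" assume l: "l \<in> PG2_lines"
    have n1: "card (L1 \<inter> l) \<ge> 1" using goodD2[OF g1 l] by (simp add: Suc_le_eq card_gt_0_iff)
    have n2: "card (L2 \<inter> l) \<ge> 1" using goodD2[OF g2 l] by (simp add: Suc_le_eq card_gt_0_iff)
    have n3: "card (L3 \<inter> l) \<ge> 1" using goodD2[OF g3 l] by (simp add: Suc_le_eq card_gt_0_iff)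
    have e: "B \<inter> l = (L1 \<inter> l) \<union> (L2 \<inter> l) \<union> (L3 \<inter> l)" unfolding B_def by blast
    have "card (B \<inter> l) = card (L1 \<inter> l) + card (L2 \<inter> l) + card (L3 \<inter> l)"
    proof -
      have d1: "(L1 \<inter> l) \<inter> (L2 \<inter> l) = {}" using assms(8) by blast
      have d2: "((L1 \<inter> l) \<union> (L2 \<inter> l)) \<inter> (L3 \<inter> l) = {}" using assms(9,10) by blast
      have "card (B \<inter> l) = card ((L1 \<inter> l) \<union> (L2 \<inter> l)) + card (L3 \<inter> l)"
        unfolding e by (rule card_Un_disjoint[OF _ _ d2]) simp_all
      also have "card ((L1 \<inter> l) \<union> (L2 \<inter> l)) = card (L1 \<inter> l) + card (L2 \<inter> l)"
        by (rule card_Un_disjoint[OF _ _ d1]) simp_all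
      finally show ?thesis .
    qed
    then show "3 \<le> card (B \<inter> l)" using n1 n2 n3 by simp
  qed
  have minimal: "\<not> t_fold_blocking 3 B'" if sb: "B' \<subset> B" for B'
  proof
    assume tb': "t_fold_blocking 3 B'"
    obtain P where P: "P \<in> B" "P \<notin> B'" using sb by blast
    obtain l :: "('a^3) set set" where l: "l \<in> PG2_lines" "P \<in> l" "card (B \<inter> l) \<le> 3"
      using tangent3[OF g1 g2 g3 assms(8,9,10) bound P(1)[unfolded B_def]] unfolding B_def by blast
    have "B' \<inter> l \<subseteq> (B \<inter> l) - {P}" using sb P by blast
    then have "card (B' \<inter> l) \<le> card ((B \<inter> l) - {P})" by (intro card_mono) simp_all
    also have "\<dots> = card (B \<inter> l) - 1" using P l by simp
    finally have "card (B' \<inter> l) \<le> 2" using l(3) by simp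
    moreover have "\<forall>L\<in>PG2_lines. card (B' \<inter> L) \<ge> 3" using tb' unfolding t_fold_blocking_def by simp
    then have "card (B' \<inter> l) \<ge> 3" using l(1) by (rule bspec)
    ultimately show False by simp
  qed
  have "minimal_t_fold_blocking 3 B"
    unfolding minimal_t_fold_blocking_def
  proof (intro conjI allI impI)
    show "t_fold_blocking 3 B" by (rule tb)
    fix B' assume "B' \<subset> B" then show "\<not> t_fold_blocking 3 B'" by (rule minimal)
  qed
  then show ?thesis unfolding B_def .
qed

end
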